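(* A Tychonoff space $X$ is both a nowhere almost $P$-space and an almost $P$-space if and only if $X$ is discrete.
   Context: $C(X)$ is the ring of real-valued continuous functions on $X$; a zero set is $Z(h)=\{x: h(x)=0\}$ with $h\in C(X)$ and a cozero set is its complement. $T''(X)$ is the set of all functions $f\colon X\to\mathbb{R}$ for which there is a dense cozero set $U$ of $X$ with $f|_U$ continuous. $\chi_A$ is the characteristic function of $A$. $X$ is a nowhere almost $P$-space if $\chi_{\{p\}}\in T''(X)$ for all $p\in X$. $X$ is an almost $P$-space if every non-empty $G_\delta$-set (equivalently, for Tychonoff $X$, every non-empty zero set) has non-empty interior. *)

theory Defs
  imports "HOL-Analysis.Analysis"
begin

definition Tychonoff_space :: "'a topology \<Rightarrow> bool" where
  "Tychonoff_space X \<longleftrightarrow> completely_regular_space X \<and> t1_space X"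

definition zero_set :: "'a topology \<Rightarrow> ('a \<Rightarrow> real) \<Rightarrow> 'a set" where
  "zero_set X h = {x \<in> topspace X. h x = 0}"

definition cozero_set_in :: "'a topology \<Rightarrow> 'a set \<Rightarrow> bool" where
  "cozero_set_in X U \<longleftrightarrow>
     (\<exists>h. continuous_map X euclideanreal h \<and> U = topspace X - zero_set X h)"

definition T2prime :: "'a topology \<Rightarrow> ('a \<Rightarrow> real) set" where
  "T2prime X = {f. \<exists>U. cozero_set_in X U \<and> X closure_of U = topspace X \<and>
                         continuous_map (subtopology X U) euclideanreal f}"

definition nowhere_almost_P_space :: "'a topology \<Rightarrow> bool" where
  "nowhere_almost_P_space X \<longleftrightarrow> (\<forall>p \<in> topspace X. indicator {p} \<in> T2prime X)"

definition almost_P_space :: "'a topology \<Rightarrow> bool" where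
  "almost_P_space X \<longleftrightarrow>
     (\<forall>G. gdelta_in X G \<and> G \<noteq> {} \<longrightarrow> X interior_of G \<noteq> {})"

end

theory Submission
  imports Defs
begin

lemma zero_set_gdelta:
  assumes h: "continuous_map X euclideanreal h"
  shows "gdelta_in X (zero_set X h)"
proof -
  define C where "C n = {x \<in> topspace X. h x \<in> {-1/real (Suc n)<..<1/real (Suc n)}}" for n
  have op: "openin X (C n)" for n
    unfolding C_def by (rule openin_continuous_map_preimage[OF h]) simp
  have eq: "zero_set X h = \<Inter> (range C)"
  proof
    show "zero_set X h \<subseteq> \<Inter> (range C)" by (auto simp: zero_set_def C_def)
  next
    show "\<Inter> (range C) \<subseteq> zero_set X h"
    proof
      fix x assume x: "x \<in> \<Inter> (range C)"
      then have xt: "x \<in> topspace X" by (auto simp: C_def)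
      have "h x = 0"
      proof (rule ccontr)
        assume "h x \<noteq> 0"
        then have "\<bar>h x\<bar> > 0" by simp
        then obtain n where "1 / real (Suc n) < \<bar>h x\<bar>"
          by (metis inverse_eq_divide reals_Archimedean)
        moreover have "x \<in> C n" using x by auto
        ultimately show False by (auto simp: C_def)
      qed
      then show "x \<in> zero_set X h" using xt by (simp add: zero_set_def)
    qed
  qed
  show ?thesis unfolding eq
    by (rule gdelta_in_Inter) (auto intro: open_imp_gdelta_in op)
qed

theorem corollary4p1:
  fixes X :: "'a topology"
  assumes "Tychonoff_space X"
  shows "(nowhere_almost_P_space X \<and> almost_P_space X) \<longleftrightarrow>
         X = discrete_topology (topspace X)"
proof
  assume A: "nowhere_almost_P_space X \<and> almost_P_space X"
  have "openin X {p}" if p: "p \<in> topspace X" for p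
  proof -
    from A p obtain U where U: "cozero_set_in X U" "X closure_of U = topspace X"
      "continuous_map (subtopology X U) euclideanreal (indicator {p})"
      by (auto simp: nowhere_almost_P_space_def T2prime_def)
    from U(1) obtain h where h: "continuous_map X euclideanreal h"
      and Ueq: "U = topspace X - zero_set X h" by (auto simp: cozero_set_in_def)
    have Z: "zero_set X h = {}"
    proof (rule ccontr)
      assume ne: "zero_set X h \<noteq> {}"
      have "X interior_of zero_set X h \<noteq> {}"
        using A ne zero_set_gdelta[OF h] by (auto simp: almost_P_space_def)
      then obtain y where y: "y \<in> X interior_of zero_set X h" by blast
      have "openin X (X interior_of zero_set X h)" by simp
      moreover have "y \<in> X closure_of U" using y interior_of_subset_topspace U(2) by (metis subsetD)
      ultimately have "\<exists>u. u \<in> U \<and> u \<in> X interior_of zero_set X h"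
        using y unfolding in_closure_of by (elim conjE allE[of _ "X interior_of zero_set X h"]) simp
      then obtain u where "u \<in> U" "u \<in> X interior_of zero_set X h" by blast
      then show False using Ueq interior_of_subset[of X "zero_set X h"] by auto
    qed
    then have "U = topspace X" using Ueq by simp
    then have c: "continuous_map X euclideanreal (indicator {p})"
      using U(3) by simp
    have "openin X {x \<in> topspace X. indicator {p} x \<in> {1/2<..<3/2::real}}"
      by (rule openin_continuous_map_preimage[OF c]) simp
    moreover have "{x \<in> topspace X. indicator {p} x \<in> {1/2<..<3/2::real}} = {p}"
      using p by (auto simp: indicator_def)
    ultimately show ?thesis by simp
  qed
  then show "X = discrete_topology (topspace X)"
    using discrete_topology_unique[of "topspace X" X] by simp
next
  assume D: "X = discrete_topology (topspace X)"
  obtain V where XV: "X = discrete_topology V" using D by blast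
  have "nowhere_almost_P_space X"
    unfolding nowhere_almost_P_space_def T2prime_def
  proof (intro ballI CollectI exI conjI)
    fix p
    show "cozero_set_in X (topspace X)"
      unfolding cozero_set_in_def
      by (rule exI[of _ "\<lambda>_. 1"]) (simp add: zero_set_def)
    show "X closure_of topspace X = topspace X" by simp
    show "continuous_map (subtopology X (topspace X)) euclideanreal (indicator {p})"
      by (simp add: XV)
  qed
  moreover have "almost_P_space X"
    unfolding almost_P_space_def
  proof (intro allI impI)
    fix G assume "gdelta_in X G \<and> G \<noteq> {}"
    then have "G \<subseteq> topspace X" "G \<noteq> {}" using gdelta_in_subset by auto
    then have "openin X G" by (simp add: XV)
    then show "X interior_of G \<noteq> {}" using \<open>G \<noteq> {}\<close> by (simp add: interior_of_openin)
  qed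
  ultimately show "nowhere_almost_P_space X \<and> almost_P_space X" by simp
qed

end
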